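(* Let $p\in[1,\infty]$ and $q$ with $\frac1p+\frac1q=1$. Let $f=(f_i)_{i\in\mathbb N}\in\ell_q$ with $f_i\ge0$ for all $i$, and let $(t_i)_{i\in\mathbb N}$ satisfy $0\le t_i\le 1$ for all $i$ and $\limsup_{i\to\infty}t_i<1$. Define bounded operators on $\ell_p$ by $Fx=\big(\sum_{i=1}^\infty f_ix_i,0,0,\dots\big)$ and $Tx=(0,t_1x_1,t_2x_2,\dots)$, and let $A=T+F$. Then $F$ is bounded and preserves $\ell_p^+=\{x\in\ell_p:x_i\ge0\ \forall i\}$, and $$R_0:=r\big(F(I-T)^{-1}\big)=f_1+\sum_{i=2}^\infty f_i\prod_{j=1}^{i-1}t_j,$$ and exactly one of the following holds: $R_0\ge r(A)>1$; $R_0=r(A)=1$; $R_0\le r(A)<1$.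
   Context: $r(\cdot)$ denotes the spectral radius (of the complexified operator). $\ell_p^+$ is a generating and normal cone in $\ell_p$. *)

theory Defs
  imports "HOL-Analysis.Analysis" "HOL-Library.Extended_Nonnegative_Real" "HOL-Library.Liminf_Limsup"
begin

text \<open>Sequences are indexed by nat starting at 0; the paper's index i corresponds to i - 1 here.
  The exponent p ranges over [1, infinity] and is an extended nonnegative real.\<close>

definition lp_space :: "ennreal \<Rightarrow> (nat \<Rightarrow> 'a::real_normed_vector) set" where
  "lp_space p = (if p = \<infinity> then {x. bounded (range x)}
                 else {x. summable (\<lambda>i. norm (x i) powr enn2real p)})"

definition lp_norm :: "ennreal \<Rightarrow> (nat \<Rightarrow> 'a::real_normed_vector) \<Rightarrow> real" where
  "lp_norm p x = (if p = \<infinity> then (SUP i. norm (x i))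
                  else (\<Sum>i. norm (x i) powr enn2real p) powr (1 / enn2real p))"

definition bounded_lp_op :: "ennreal \<Rightarrow> ((nat \<Rightarrow> real) \<Rightarrow> (nat \<Rightarrow> real)) \<Rightarrow> bool" where
  "bounded_lp_op p L \<longleftrightarrow>
     (\<forall>x\<in>lp_space p. L x \<in> lp_space p) \<and>
     (\<forall>x\<in>lp_space p. \<forall>y\<in>lp_space p. L (\<lambda>i. x i + y i) = (\<lambda>i. L x i + L y i)) \<and>
     (\<forall>x\<in>lp_space p. \<forall>a::real. L (\<lambda>i. a * x i) = (\<lambda>i. a * L x i)) \<and>
     (\<exists>C. \<forall>x\<in>lp_space p. lp_norm p (L x) \<le> C * lp_norm p x)"

definition lp_plus :: "ennreal \<Rightarrow> (nat \<Rightarrow> real) set" where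
  "lp_plus p = {x \<in> lp_space p. \<forall>i. 0 \<le> x i}"

definition preserves_cone :: "ennreal \<Rightarrow> ((nat \<Rightarrow> real) \<Rightarrow> (nat \<Rightarrow> real)) \<Rightarrow> bool" where
  "preserves_cone p L \<longleftrightarrow> (\<forall>x\<in>lp_plus p. L x \<in> lp_plus p)"

definition complexify :: "((nat \<Rightarrow> real) \<Rightarrow> (nat \<Rightarrow> real)) \<Rightarrow> (nat \<Rightarrow> complex) \<Rightarrow> (nat \<Rightarrow> complex)" where
  "complexify L z = (\<lambda>i. Complex (L (\<lambda>j. Re (z j)) i) (L (\<lambda>j. Im (z j)) i))"

text \<open>Spectrum of the complexified operator on the complex l_p: lambda such that
  lambda I - L_C is not a bijection of l_p(C) (bounded inverse is automatic by the open mapping theorem).\<close>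
definition lp_spectrum :: "ennreal \<Rightarrow> ((nat \<Rightarrow> real) \<Rightarrow> (nat \<Rightarrow> real)) \<Rightarrow> complex set" where
  "lp_spectrum p L = {l. \<not> bij_betw (\<lambda>z i. l * z i - complexify L z i)
                                      (lp_space p) (lp_space p)}"

definition spectral_radius :: "ennreal \<Rightarrow> ((nat \<Rightarrow> real) \<Rightarrow> (nat \<Rightarrow> real)) \<Rightarrow> real" where
  "spectral_radius p L = Sup (cmod ` lp_spectrum p L)"

end

theory Submission imports Defs begin


lemma pq_cases:
  assumes "1 \<le> p" "1/p + 1/q = (1::ennreal)"
  shows "(p = \<infinity> \<and> q = 1) \<or> (p = 1 \<and> q = \<infinity>) \<or>
     (\<exists>P Q. p = ennreal P \<and> q = ennreal Q \<and> 1 < P \<and> 1 < Q \<and> 1/P + 1/Q = 1)"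
proof (cases "p = \<infinity>")
  case True
  then have "1/q = 1" using assms by simp
  then show ?thesis using True by (simp add: divide_eq_1_ennreal)
next
  case pfin: False
  then obtain P where P: "p = ennreal P" "P \<ge> 1" using assms(1)
    by (cases p) (auto simp flip: ennreal_1)
  show ?thesis
  proof (cases "q = \<infinity>")
    case True
    then have "1/p = 1" using assms by simp
    then show ?thesis using True by (simp add: divide_eq_1_ennreal)
  next
    case False
    then obtain Q where Q: "q = ennreal Q" "Q \<ge> 0"
      by (cases q) auto
    have "Q \<noteq> 0"
    proof
      assume "Q = 0"
      then have "1/q = \<infinity>" using Q by (simp add: divide_ennreal_def)
      then show False using assms(2) by simp
    qed
    then have Qp: "Q > 0" using Q by simp
    have "1/p = ennreal (1/P)" using P divide_ennreal[of 1 P] by simp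
    moreover have "1/q = ennreal (1/Q)" using Q Qp divide_ennreal[of 1 Q] by simp
    ultimately have "ennreal (1/P + 1/Q) = ennreal 1" using assms(2) P Qp
      by (simp add: ennreal_plus[symmetric] del: ennreal_plus)
    then have e: "1/P + 1/Q = 1" using P Qp
      by (subst (asm) ennreal_inj) auto
    have "P \<noteq> 1" using e Qp by auto
    then have "P > 1" using P by auto
    moreover have "Q > 1"
    proof (rule ccontr)
      assume "\<not> Q > 1"
      then have "1/Q \<ge> 1" using Qp by simp
      then show False using e P by (smt (verit) divide_pos_pos)
    qed
    ultimately show ?thesis using P Q e by blast
  qed
qed


lemma lp_fin_iff: "p \<noteq> \<infinity> \<Longrightarrow> x \<in> lp_space p \<longleftrightarrow> summable (\<lambda>i. norm (x i) powr enn2real p)"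
  by (simp add: lp_space_def)

lemma lp_inf_iff: "p = \<infinity> \<Longrightarrow> x \<in> lp_space p \<longleftrightarrow> (\<exists>B. \<forall>i. norm (x i) \<le> B)"
  by (auto simp: lp_space_def bounded_iff)

lemma lp_mono:
  fixes x :: "nat \<Rightarrow> 'a::real_normed_vector" and y :: "nat \<Rightarrow> 'b::real_normed_vector"
  assumes "x \<in> lp_space p" "\<And>i. norm (y i) \<le> norm (x i)"
  shows "y \<in> lp_space p"
proof (cases "p = \<infinity>")
  case True
  show ?thesis using assms by (auto simp: lp_inf_iff[OF True] intro: order_trans)
next
  case False
  have "summable (\<lambda>i. norm (y i) powr enn2real p)"
    apply (rule summable_comparison_test[OF _ assms(1)[unfolded lp_fin_iff[OF False]]])
    using assms(2) by (auto intro!: exI[of _ 0] powr_mono2)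
  then show ?thesis using False by (simp add: lp_fin_iff)
qed

lemma lp_norm_iff: "x \<in> lp_space p \<longleftrightarrow> (\<lambda>i. norm (x i)) \<in> lp_space p"
  using lp_mono[of x p "\<lambda>i. norm (x i)"] lp_mono[of "\<lambda>i. norm (x i)" p x] by auto

lemma lp_scale_real:
  fixes x :: "nat \<Rightarrow> real"
  assumes "x \<in> lp_space p"
  shows "(\<lambda>i. r * x i) \<in> lp_space p"
proof (cases "p = \<infinity>")
  case True
  obtain B where "\<forall>i. norm (x i) \<le> B" using assms by (auto simp: lp_inf_iff[OF True])
  then have "\<forall>i. norm (r * x i) \<le> \<bar>r\<bar> * B" by (simp add: abs_mult mult_left_mono)
  then show ?thesis by (auto simp: lp_inf_iff[OF True])
next
  case False
  have "summable (\<lambda>i. \<bar>r\<bar> powr enn2real p * norm (x i) powr enn2real p)"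
    using assms False by (simp add: lp_fin_iff summable_mult)
  then have "summable (\<lambda>i. norm (r * x i) powr enn2real p)"
    by (simp add: abs_mult powr_mult)
  then show ?thesis using False by (simp add: lp_fin_iff)
qed

lemma lp_mult:
  fixes x :: "nat \<Rightarrow> 'a::real_normed_algebra"
  assumes "x \<in> lp_space p"
  shows "(\<lambda>i. c * x i) \<in> lp_space p"
  apply (rule lp_mono[OF lp_scale_real[of "\<lambda>i. norm (x i)" p "norm c"]])
  using assms lp_norm_iff apply blast
  by (simp add: norm_mult_ineq)

lemma lp_add:
  fixes x y :: "nat \<Rightarrow> 'a::real_normed_vector"
  assumes "x \<in> lp_space p" "y \<in> lp_space p"
  shows "(\<lambda>i. x i + y i) \<in> lp_space p"
proof (cases "p = \<infinity>")
  case True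
  obtain B C where "\<forall>i. norm (x i) \<le> B" "\<forall>i. norm (y i) \<le> C" using assms by (auto simp: lp_inf_iff[OF True])
  then have "\<forall>i. norm (x i + y i) \<le> B + C" by (meson add_mono norm_triangle_le)
  then show ?thesis by (auto simp: lp_inf_iff[OF True])
next
  case False
  define P where "P = enn2real p"
  have P0: "P \<ge> 0" by (simp add: P_def)
  have le: "norm (x i + y i) powr P \<le> 2 powr P * (norm (x i) powr P + norm (y i) powr P)" for i
  proof -
    have "norm (x i + y i) powr P \<le> (2 * max (norm (x i)) (norm (y i))) powr P"
      apply (rule powr_mono2[OF P0]) apply simp
      by (smt (verit) norm_triangle_ineq)
    also have "\<dots> = 2 powr P * max (norm (x i)) (norm (y i)) powr P"
      by (simp add: powr_mult)
    also have "\<dots> \<le> 2 powr P * (norm (x i) powr P + norm (y i) powr P)"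
      apply (rule mult_left_mono) apply (cases "norm (x i) \<le> norm (y i)")
      by (auto simp: max_def)
    finally show ?thesis .
  qed
  have "summable (\<lambda>i. 2 powr P * (norm (x i) powr P + norm (y i) powr P))"
    using assms False by (auto simp: lp_fin_iff P_def intro!: summable_mult summable_add)
  then have "summable (\<lambda>i. norm (x i + y i) powr P)"
    by (rule summable_comparison_test[rotated]) (use le in auto)
  then show ?thesis using False by (simp add: lp_fin_iff P_def)
qed

lemma lp_uminus:
  fixes x :: "nat \<Rightarrow> 'a::real_normed_vector"
  shows "x \<in> lp_space p \<Longrightarrow> (\<lambda>i. - x i) \<in> lp_space p"
  by (rule lp_mono) auto

lemma lp_diff:
  fixes x y :: "nat \<Rightarrow> 'a::real_normed_vector"
  assumes "x \<in> lp_space p" "y \<in> lp_space p"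
  shows "(\<lambda>i. x i - y i) \<in> lp_space p"
  using lp_add[OF assms(1) lp_uminus[OF assms(2)]] by simp

lemma lp_shift:
  fixes x :: "nat \<Rightarrow> 'a::real_normed_vector"
  assumes "x \<in> lp_space p"
  shows "(\<lambda>i. if i = 0 then a else x (i - 1)) \<in> lp_space p"
proof (cases "p = \<infinity>")
  case True
  obtain B where B: "\<forall>i. norm (x i) \<le> B" using assms by (auto simp: lp_inf_iff[OF True])
  have "\<forall>i. norm (if i = 0 then a else x (i - 1)) \<le> max B (norm a)"
    using B by (auto simp: le_max_iff_disj)
  then show ?thesis unfolding lp_inf_iff[OF True] by blast
next
  case False
  have "summable (\<lambda>i. norm (if Suc i = 0 then a else x (Suc i - 1)) powr enn2real p)"
    using assms False by (simp add: lp_fin_iff)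
  then have "summable (\<lambda>i. norm (if i = 0 then a else x (i - 1)) powr enn2real p)"
    by (subst summable_Suc_iff[symmetric])
  then show ?thesis using False by (simp add: lp_fin_iff)
qed

lemma lp_zero: "(\<lambda>i. 0) \<in> lp_space p"
  by (cases "p = \<infinity>") (auto simp: lp_space_def)

lemma lp_single:
  fixes a :: "'a::real_normed_vector"
  shows "(\<lambda>i. if i = j then a else 0) \<in> lp_space p"
proof (cases "p = \<infinity>")
  case True
  have "\<forall>i. norm (if i = j then a else 0) \<le> norm a" by auto
  then show ?thesis by (auto simp: lp_inf_iff[OF True])
next
  case False
  have "summable (\<lambda>i. if i = j then norm a powr enn2real p else 0)" by simp
  then have "summable (\<lambda>i. norm (if i = j then a else 0) powr enn2real p)"
    by (rule summable_cong[THEN iffD1, rotated]) auto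
  then show ?thesis using False by (simp add: lp_fin_iff)
qed



lemma holder_finite:
  fixes a b :: "'i \<Rightarrow> real"
  assumes S: "finite S" and a: "\<And>i. a i \<ge> 0" and b: "\<And>i. b i \<ge> 0"
    and PQ: "P > 1" "Q > 1" "1/P + 1/Q = 1"
  shows "(\<Sum>i\<in>S. a i * b i) \<le> (\<Sum>i\<in>S. a i powr P) powr (1/P) * (\<Sum>i\<in>S. b i powr Q) powr (1/Q)"
proof -
  define A where "A = (\<Sum>i\<in>S. a i powr P)"
  define B where "B = (\<Sum>i\<in>S. b i powr Q)"
  have A0: "A \<ge> 0" and B0: "B \<ge> 0" by (auto simp: A_def B_def intro!: sum_nonneg)
  show ?thesis
  proof (cases "A = 0 \<or> B = 0")
    case True
    then have "\<forall>i\<in>S. a i = 0 \<or> b i = 0"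
      using S by (auto simp: A_def B_def sum_nonneg_eq_0_iff)
    then have "(\<Sum>i\<in>S. a i * b i) = 0" by (auto intro!: sum.neutral)
    then show ?thesis by (simp add: A_def[symmetric] B_def[symmetric])
  next
    case False
    then have Ap: "A > 0" and Bp: "B > 0" using A0 B0 by auto
    define \<alpha> where "\<alpha> = A powr (1/P)"
    define \<beta> where "\<beta> = B powr (1/Q)"
    have al: "\<alpha> > 0" "\<beta> > 0" using Ap Bp by (auto simp: \<alpha>_def \<beta>_def)
    have aP: "\<alpha> powr P = A" using Ap PQ by (simp add: \<alpha>_def powr_powr)
    have bQ: "\<beta> powr Q = B" using Bp PQ by (simp add: \<beta>_def powr_powr)
    have y: "(a i / \<alpha>) * (b i / \<beta>) \<le> a i powr P / (A * P) + b i powr Q / (B * Q)" for i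
    proof -
      have "(a i / \<alpha>) * (b i / \<beta>) \<le> (a i / \<alpha>) powr P / P + (b i / \<beta>) powr Q / Q"
        using al a b PQ by (intro Youngs_inequality) auto
      also have "\<dots> = a i powr P / (A * P) + b i powr Q / (B * Q)"
        using al a b by (simp add: powr_divide aP bQ)
      finally show ?thesis .
    qed
    have "(\<Sum>i\<in>S. a i * b i) / (\<alpha> * \<beta>) = (\<Sum>i\<in>S. (a i / \<alpha>) * (b i / \<beta>))"
      by (simp add: sum_divide_distrib)
    also have "\<dots> \<le> (\<Sum>i\<in>S. a i powr P / (A * P) + b i powr Q / (B * Q))"
      by (intro sum_mono y)
    also have "\<dots> = A / (A * P) + B / (B * Q)"
      by (simp add: sum.distrib A_def B_def sum_divide_distrib)
    also have "\<dots> = 1" using Ap Bp PQ by simp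
    finally have "(\<Sum>i\<in>S. a i * b i) \<le> \<alpha> * \<beta>" using al by (simp add: divide_le_eq)
    then show ?thesis by (simp add: \<alpha>_def \<beta>_def A_def B_def)
  qed
qed

lemma holder_seq:
  fixes a b :: "nat \<Rightarrow> real"
  assumes a: "\<And>i. a i \<ge> 0" and b: "\<And>i. b i \<ge> 0"
    and PQ: "P > 1" "Q > 1" "1/P + 1/Q = 1"
    and sa: "summable (\<lambda>i. a i powr P)" and sb: "summable (\<lambda>i. b i powr Q)"
  shows "summable (\<lambda>i. a i * b i)"
    "(\<Sum>i. a i * b i) \<le> (\<Sum>i. a i powr P) powr (1/P) * (\<Sum>i. b i powr Q) powr (1/Q)"
proof -
  have y: "a i * b i \<le> a i powr P / P + b i powr Q / Q" for i
    using a b PQ by (intro Youngs_inequality) auto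
  have "summable (\<lambda>i. a i powr P / P + b i powr Q / Q)"
    using sa sb by (intro summable_add summable_divide)
  then show s: "summable (\<lambda>i. a i * b i)"
    apply (rule summable_comparison_test[rotated])
    using a b y by (intro exI[of _ 0]) (auto intro: order_trans[OF _ y])
  show "(\<Sum>i. a i * b i) \<le> (\<Sum>i. a i powr P) powr (1/P) * (\<Sum>i. b i powr Q) powr (1/Q)"
  proof (rule suminf_le_const[OF s])
    fix n
    have "(\<Sum>i<n. a i * b i) \<le> (\<Sum>i<n. a i powr P) powr (1/P) * (\<Sum>i<n. b i powr Q) powr (1/Q)"
      by (rule holder_finite) (use a b PQ in auto)
    also have "\<dots> \<le> (\<Sum>i. a i powr P) powr (1/P) * (\<Sum>i. b i powr Q) powr (1/Q)"
      apply (intro mult_mono powr_mono2 sum_le_suminf sa sb)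
      using PQ by (auto intro!: sum_nonneg suminf_nonneg sa sb)
    finally show "(\<Sum>i<n. a i * b i) \<le> (\<Sum>i. a i powr P) powr (1/P) * (\<Sum>i. b i powr Q) powr (1/Q)" .
  qed
qed



lemma holder_lp:
  fixes f :: "nat \<Rightarrow> real" and x :: "nat \<Rightarrow> 'a::real_normed_vector"
  assumes hp: "1 \<le> p" and hq: "1/p + 1/q = 1" and hf: "f \<in> lp_space q" and hx: "x \<in> lp_space p"
  shows "summable (\<lambda>k. \<bar>f k\<bar> * norm (x k)) \<and>
         (\<Sum>k. \<bar>f k\<bar> * norm (x k)) \<le> lp_norm q f * lp_norm p x"
  using pq_cases[OF hp hq]
proof (elim disjE exE conjE)
  assume p: "p = \<infinity>" and q: "q = 1"
  obtain B where B: "\<And>i. norm (x i) \<le> B" using hx lp_inf_iff[OF p] by auto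
  have bdd: "bdd_above (range (\<lambda>i. norm (x i)))" by (rule bdd_aboveI[where M=B]) (auto simp: B)
  have X: "lp_norm p x = (SUP i. norm (x i))" using p by (simp add: lp_norm_def)
  have le: "norm (x i) \<le> lp_norm p x" for i unfolding X by (rule cSUP_upper[OF _ bdd]) auto
  have sf: "summable (\<lambda>i. \<bar>f i\<bar>)" using hf q by (simp add: lp_space_def)
  have nf: "lp_norm q f = (\<Sum>i. \<bar>f i\<bar>)" using q sf by (simp add: lp_norm_def suminf_nonneg)
  have s2: "summable (\<lambda>k. \<bar>f k\<bar> * lp_norm p x)" using sf by (rule summable_mult2)
  have s: "summable (\<lambda>k. \<bar>f k\<bar> * norm (x k))"
    apply (rule summable_comparison_test[OF _ s2]) using le by (auto intro!: mult_left_mono)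
  moreover have "(\<Sum>k. \<bar>f k\<bar> * norm (x k)) \<le> (\<Sum>k. \<bar>f k\<bar> * lp_norm p x)"
    by (rule suminf_le[OF _ s s2]) (use le in \<open>auto intro!: mult_left_mono\<close>)
  ultimately show ?thesis using nf sf by (simp add: suminf_mult2)
next
  assume p: "p = 1" and q: "q = \<infinity>"
  obtain B where B: "\<And>i. norm (f i) \<le> B" using hf lp_inf_iff[OF q] by blast
  have bdd: "bdd_above (range (\<lambda>i. norm (f i)))" by (rule bdd_aboveI[where M=B]) (use B in auto)
  have X: "lp_norm q f = (SUP i. norm (f i))" using q by (simp add: lp_norm_def)
  have le: "\<bar>f i\<bar> \<le> lp_norm q f" for i unfolding X using cSUP_upper[OF _ bdd] by auto
  have sf: "summable (\<lambda>i. norm (x i))" using hx p by (simp add: lp_space_def)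
  have nf: "lp_norm p x = (\<Sum>i. norm (x i))" using p sf by (simp add: lp_norm_def suminf_nonneg)
  have s2: "summable (\<lambda>k. lp_norm q f * norm (x k))" using sf by (rule summable_mult)
  have s: "summable (\<lambda>k. \<bar>f k\<bar> * norm (x k))"
    apply (rule summable_comparison_test[OF _ s2]) using le by (auto intro!: mult_right_mono)
  moreover have "(\<Sum>k. \<bar>f k\<bar> * norm (x k)) \<le> (\<Sum>k. lp_norm q f * norm (x k))"
    by (rule suminf_le[OF _ s s2]) (use le in \<open>auto intro!: mult_right_mono\<close>)
  ultimately show ?thesis using nf sf by (simp add: suminf_mult)
next
  fix P Q assume p: "p = ennreal P" and q: "q = ennreal Q" and PQ: "1 < P" "1 < Q" "1/P + 1/Q = 1"
  have ep: "enn2real p = P" "p \<noteq> \<infinity>" using p PQ by auto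
  have eq: "enn2real q = Q" "q \<noteq> \<infinity>" using q PQ by auto
  have sx: "summable (\<lambda>i. norm (x i) powr P)" using hx ep by (simp add: lp_space_def)
  have sf: "summable (\<lambda>i. \<bar>f i\<bar> powr Q)" using hf eq by (simp add: lp_space_def)
  note h = holder_seq[of "\<lambda>i. \<bar>f i\<bar>" "\<lambda>i. norm (x i)" Q P, OF _ _ PQ(2) PQ(1) _ sf sx]
  have "1/Q + 1/P = 1" using PQ by simp
  then show ?thesis using h ep eq by (simp add: lp_norm_def)
qed

lemma holder_summable:
  fixes f :: "nat \<Rightarrow> real" and x :: "nat \<Rightarrow> 'a::{real_normed_div_algebra,banach}"
  assumes hp: "1 \<le> p" and hq: "1/p + 1/q = 1" and hf: "f \<in> lp_space q" and hx: "x \<in> lp_space p"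
  shows "summable (\<lambda>k. of_real (f k) * x k)"
proof -
  have "summable (\<lambda>k. norm (of_real (f k) * x k))"
    using holder_lp[OF assms] by (simp add: norm_mult)
  then show ?thesis by (rule summable_norm_cancel)
qed



lemma geom_kernel_bound:
  fixes s :: real assumes "0 \<le> s" "s < 1"
  shows "(\<Sum>k\<le>i. s^(i-k)) \<le> 1/(1-s)"
proof (induction i)
  case 0 then show ?case using assms by (simp add: field_simps)
next
  case (Suc i)
  have "(\<Sum>k\<le>Suc i. s^(Suc i-k)) = s * (\<Sum>k\<le>i. s^(i-k)) + 1"
    by (simp add: sum_distrib_left Suc_diff_le power_Suc[symmetric] del: power_Suc)
  also have "\<dots> \<le> s * (1/(1-s)) + 1" using Suc assms by (intro add_mono mult_left_mono) auto
  also have "\<dots> = 1/(1-s)" using assms by (simp add: field_simps)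
  finally show ?case .
qed

lemma kernel_lp:
  fixes y :: "nat \<Rightarrow> real"
  assumes hp: "1 \<le> p" and hy: "y \<in> lp_space p" and y0: "\<And>i. y i \<ge> 0" and s: "0 \<le> s" "s < 1"
  shows "(\<lambda>i. \<Sum>k\<le>i. s^(i-k) * y k) \<in> lp_space p"
proof (cases "p = \<infinity>")
  case True
  obtain B where B: "\<And>i. norm (y i) \<le> B" using hy lp_inf_iff[OF True] by blast
  have "norm (\<Sum>k\<le>i. s^(i-k) * y k) \<le> B * (1/(1-s))" for i
  proof -
    have "norm (\<Sum>k\<le>i. s^(i-k) * y k) = (\<Sum>k\<le>i. s^(i-k) * y k)"
      using y0 s unfolding real_norm_def by (intro abs_of_nonneg sum_nonneg) auto
    also have "\<dots> \<le> (\<Sum>k\<le>i. s^(i-k) * B)"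
      using B y0 s by (intro sum_mono mult_left_mono) (auto intro: order_trans[OF abs_ge_self])
    also have "\<dots> = B * (\<Sum>k\<le>i. s^(i-k))" by (simp add: sum_distrib_left mult.commute)
    also have "\<dots> \<le> B * (1/(1-s))"
      using geom_kernel_bound[OF s] B[of 0] y0[of 0] by (intro mult_left_mono) auto
    finally show ?thesis .
  qed
  then show ?thesis unfolding lp_inf_iff[OF True] by blast
next
  case False
  define P where "P = enn2real p"
  have pP: "p = ennreal P" "P \<ge> 1" using False hp by (cases p; auto simp: P_def simp flip: ennreal_1)+
  have sy: "summable (\<lambda>i. y i powr P)" using hy False y0 by (simp add: lp_fin_iff P_def)
  have sg: "summable (\<lambda>k. norm (s^k))" using s by (simp add: summable_geometric)
  have sy': "summable (\<lambda>k. norm (y k powr P))" using sy by simp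
  have cp: "summable (\<lambda>i. \<Sum>k\<le>i. y k powr P * s^(i-k))"
    using Cauchy_product_sums[OF sy' sg] by (simp add: sums_iff)
  define G where "G = 1/(1-s)"
  have G: "G > 0" using s by (simp add: G_def)
  have bnd: "(\<Sum>k\<le>i. s^(i-k) * y k) powr P \<le> G powr (P - 1) * (\<Sum>k\<le>i. y k powr P * s^(i-k))" for i
  proof (cases "P = 1")
    case True
    have "(\<Sum>k\<le>i. s^(i-k) * y k) \<ge> 0" using s y0 by (auto intro!: sum_nonneg)
    then show ?thesis using True y0 G by (simp add: mult.commute)
  next
    case False
    then have P1: "P > 1" using pP by simp
    define Q where "Q = P / (P - 1)"
    have Q1: "Q > 1" using P1 by (simp add: Q_def field_simps)
    have PQ: "1/P + 1/Q = 1" using P1 by (simp add: Q_def field_simps)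
    define \<alpha> where "\<alpha> k = s^(i-k)" for k
    have a0: "\<alpha> k \<ge> 0" for k using s by (simp add: \<alpha>_def)
    have "(\<Sum>k\<le>i. \<alpha> k * y k) = (\<Sum>k\<le>i. \<alpha> k powr (1/Q) * (\<alpha> k powr (1/P) * y k))"
    proof (rule sum.cong[OF refl])
      fix k
      have "\<alpha> k powr (1/Q) * \<alpha> k powr (1/P) = \<alpha> k" using a0[of k] PQ
        by (cases "\<alpha> k = 0") (auto simp: add.commute simp flip: powr_add)
      then show "\<alpha> k * y k = \<alpha> k powr (1/Q) * (\<alpha> k powr (1/P) * y k)" by (simp add: mult.assoc)
    qed
    also have "\<dots> \<le> (\<Sum>k\<le>i. (\<alpha> k powr (1/Q)) powr Q) powr (1/Q) * (\<Sum>k\<le>i. (\<alpha> k powr (1/P) * y k) powr P) powr (1/P)"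
      by (rule holder_finite) (use Q1 P1 PQ y0 in \<open>auto simp: add.commute\<close>)
    also have "\<dots> = (\<Sum>k\<le>i. \<alpha> k) powr (1/Q) * (\<Sum>k\<le>i. \<alpha> k * y k powr P) powr (1/P)"
      using a0 y0 Q1 P1 by (simp add: powr_powr powr_mult)
    finally have h: "(\<Sum>k\<le>i. \<alpha> k * y k) \<le> (\<Sum>k\<le>i. \<alpha> k) powr (1/Q) * (\<Sum>k\<le>i. \<alpha> k * y k powr P) powr (1/P)" .
    have n1: "(\<Sum>k\<le>i. \<alpha> k * y k) \<ge> 0" using a0 y0 by (auto intro!: sum_nonneg)
    have n2: "(\<Sum>k\<le>i. \<alpha> k) \<ge> 0" "(\<Sum>k\<le>i. \<alpha> k * y k powr P) \<ge> 0" using a0 y0 by (auto intro!: sum_nonneg)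
    have "(\<Sum>k\<le>i. \<alpha> k * y k) powr P \<le> ((\<Sum>k\<le>i. \<alpha> k) powr (1/Q) * (\<Sum>k\<le>i. \<alpha> k * y k powr P) powr (1/P)) powr P"
      using h n1 P1 by (intro powr_mono2) auto
    also have "\<dots> = (\<Sum>k\<le>i. \<alpha> k) powr (P/Q) * (\<Sum>k\<le>i. \<alpha> k * y k powr P)"
      using n2 P1 by (simp add: powr_mult powr_powr)
    also have "\<dots> \<le> G powr (P - 1) * (\<Sum>k\<le>i. \<alpha> k * y k powr P)"
    proof -
      have "P/Q = P - 1" using P1 by (simp add: Q_def)
      moreover have "(\<Sum>k\<le>i. \<alpha> k) \<le> G" using geom_kernel_bound[OF s] by (simp add: \<alpha>_def G_def)
      ultimately show ?thesis using n2 P1 by (intro mult_right_mono) (auto intro!: powr_mono2)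
    qed
    finally show ?thesis by (simp add: \<alpha>_def mult.commute)
  qed
  have "summable (\<lambda>i. G powr (P - 1) * (\<Sum>k\<le>i. y k powr P * s^(i-k)))"
    using cp by (rule summable_mult)
  then have "summable (\<lambda>i. norm (\<Sum>k\<le>i. s^(i-k) * y k) powr P)"
    apply (rule summable_comparison_test[rotated])
    apply (intro exI[of _ 0] allI impI)
    using bnd s y0 by (auto simp: abs_of_nonneg sum_nonneg)
  then show ?thesis using False by (simp add: lp_fin_iff P_def)
qed



locale LS =
  fixes p q :: ennreal and f t :: "nat \<Rightarrow> real" and c :: real and N :: nat
  assumes hp: "1 \<le> p" and hq: "1/p + 1/q = 1" and hf: "f \<in> lp_space q"
    and hfpos: "\<forall>i. 0 \<le> f i" and ht: "\<forall>i. 0 \<le> t i \<and> t i \<le> 1"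
    and c: "0 < c" "c < 1" and tN: "\<forall>j\<ge>N. t j \<le> c"
begin

definition pi :: "nat \<Rightarrow> nat \<Rightarrow> real" where
  "pi k i = (\<Prod>j\<in>{k..<i}. t j)"

lemma pi_nonneg: "pi k i \<ge> 0"
  using ht by (auto simp: pi_def intro!: prod_nonneg)

lemma pi_Suc: "k \<le> i \<Longrightarrow> pi k (Suc i) = pi k i * t i"
  by (simp add: pi_def prod.atLeastLessThan_Suc)

lemma pi_refl[simp]: "pi k k = 1"
  by (simp add: pi_def)

lemma pi_bound_aux: "k \<le> i \<Longrightarrow> pi k i * c^(min i N) \<le> c^(i-k) * c^(min k N)"
proof (induction i rule: dec_induct)
  case base then show ?case by simp
next
  case (step i)
  have ti: "0 \<le> t i" "t i \<le> 1" using ht by auto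
  show ?case
  proof (cases "N \<le> i")
    case True
    then have "min (Suc i) N = min i N" by simp
    moreover have "t i \<le> c" using tN True by auto
    ultimately have "pi k (Suc i) * c^(min (Suc i) N) = t i * (pi k i * c^(min i N))"
      using step by (simp add: pi_Suc)
    also have "\<dots> \<le> c * (c^(i-k) * c^(min k N))"
      by (rule mult_mono[OF _ step.IH]) (use ti c pi_nonneg \<open>t i \<le> c\<close> in auto)
    also have "\<dots> = c^(Suc i - k) * c^(min k N)" using step by (simp add: Suc_diff_le)
    finally show ?thesis .
  next
    case False
    then have "min (Suc i) N = Suc (min i N)" by simp
    then have "pi k (Suc i) * c^(min (Suc i) N) = (t i * c) * (pi k i * c^(min i N))"
      using step False by (simp add: pi_Suc min_def)
    also have "\<dots> \<le> c * (c^(i-k) * c^(min k N))"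
      by (rule mult_mono[OF _ step.IH]) (use ti c pi_nonneg in auto)
    also have "\<dots> = c^(Suc i - k) * c^(min k N)" using step by (simp add: Suc_diff_le)
    finally show ?thesis .
  qed
qed

lemma pi_bound: "k \<le> i \<Longrightarrow> pi k i \<le> c^(i-k) / c^N"
proof -
  assume ki: "k \<le> i"
  have "pi k i * c^N \<le> pi k i * c^(min i N)"
    using c pi_nonneg by (intro mult_left_mono power_decreasing) auto
  also have "\<dots> \<le> c^(i-k) * c^(min k N)" by (rule pi_bound_aux[OF ki])
  also have "\<dots> \<le> c^(i-k)" using c by (intro mult_left_le power_le_one) auto
  finally show ?thesis using c by (simp add: field_simps)
qed

definition RT :: "'a::real_normed_field \<Rightarrow> (nat \<Rightarrow> 'a) \<Rightarrow> nat \<Rightarrow> 'a" where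
  "RT l w i = (\<Sum>k\<le>i. of_real (pi k i) * w k / l^(Suc (i-k)))"

lemma RT_0: "RT l w 0 = w 0 / l"
  by (simp add: RT_def)

lemma RT_Suc:
  assumes "l \<noteq> 0"
  shows "RT l w (Suc i) = (w (Suc i) + of_real (t i) * RT l w i) / l"
proof -
  have "RT l w (Suc i) = (\<Sum>k\<le>i. of_real (pi k (Suc i)) * w k / l^(Suc (Suc i-k))) + w (Suc i) / l"
    by (simp add: RT_def)
  also have "(\<Sum>k\<le>i. of_real (pi k (Suc i)) * w k / l^(Suc (Suc i-k))) =
      (\<Sum>k\<le>i. of_real (t i) * (of_real (pi k i) * w k / l^(Suc (i-k))) / l)"
    by (intro sum.cong refl) (simp add: pi_Suc Suc_diff_le field_simps)
  also have "\<dots> = of_real (t i) * RT l w i / l"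
    by (simp add: RT_def sum_distrib_left sum_divide_distrib)
  finally show ?thesis by (simp add: add_divide_distrib)
qed

lemma RT_norm:
  assumes "norm l > c"
  shows "norm (RT l w i) \<le> (1 / (c^N * norm l)) * (\<Sum>k\<le>i. (c / norm l)^(i-k) * norm (w k))"
proof -
  have l0: "norm l > 0" using assms c by linarith
  have "norm (RT l w i) \<le> (\<Sum>k\<le>i. norm (of_real (pi k i) * w k / l^(Suc (i-k))))"
    unfolding RT_def by (rule norm_sum)
  also have "\<dots> \<le> (\<Sum>k\<le>i. (1 / (c^N * norm l)) * ((c / norm l)^(i-k) * norm (w k)))"
  proof (rule sum_mono)
    fix k assume "k \<in> {..i}"
    then have ki: "k \<le> i" by simp
    have "norm (of_real (pi k i) * w k / l^(Suc (i-k))) = pi k i * norm (w k) / (norm l^(i-k) * norm l)"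
      using pi_nonneg by (simp add: norm_mult norm_divide norm_power mult.commute)
    also have "\<dots> \<le> (c^(i-k) / c^N) * norm (w k) / (norm l^(i-k) * norm l)"
      using pi_bound[OF ki] l0 by (intro divide_right_mono mult_right_mono) auto
    also have "\<dots> = (1 / (c^N * norm l)) * ((c / norm l)^(i-k) * norm (w k))"
      using l0 c by (simp add: field_simps power_divide)
    finally show "norm (of_real (pi k i) * w k / l^(Suc (i-k))) \<le> (1 / (c^N * norm l)) * ((c / norm l)^(i-k) * norm (w k))" .
  qed
  also have "\<dots> = (1 / (c^N * norm l)) * (\<Sum>k\<le>i. (c / norm l)^(i-k) * norm (w k))"
    by (simp add: sum_distrib_left)
  finally show ?thesis .
qed

lemma RT_lp:
  fixes l :: "'a::real_normed_field"
  assumes "norm l > c" "w \<in> lp_space p"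
  shows "RT l w \<in> lp_space p"
proof -
  have l0: "norm l > 0" using assms c by linarith
  have "(\<lambda>i. \<Sum>k\<le>i. (c / norm l)^(i-k) * norm (w k)) \<in> lp_space p"
    apply (rule kernel_lp[OF hp])
    using assms lp_norm_iff apply blast
    using c l0 assms by auto
  then have "(\<lambda>i. (1 / (c^N * norm l)) * (\<Sum>k\<le>i. (c / norm l)^(i-k) * norm (w k))) \<in> lp_space p"
    by (rule lp_scale_real)
  then show ?thesis
    apply (rule lp_mono)
    using RT_norm[OF assms(1)] c l0 by (simp add: sum_nonneg abs_mult)
qed

lemma RT_e0: "RT l (\<lambda>i. if i = 0 then 1 else 0) i = of_real (pi 0 i) / l^(Suc i)"
  by (simp add: RT_def sum.atMost_shift if_distrib cong: if_cong)

lemma RT_add: "RT l (\<lambda>i. x i + y i) i = RT l x i + RT l y i"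
  by (simp add: RT_def distrib_left add_divide_distrib sum.distrib)

lemma RT_mult: "RT l (\<lambda>i. a * x i) i = a * RT l x i"
  by (simp add: RT_def sum_distrib_left mult.left_commute)

lemma RT_diff: "RT l (\<lambda>i. x i - y i) i = RT l x i - RT l y i"
  by (simp add: RT_def right_diff_distrib diff_divide_distrib sum_subtractf)

end


context LS begin

definition Ac :: "(nat \<Rightarrow> complex) \<Rightarrow> nat \<Rightarrow> complex" where
  "Ac z i = (if i = 0 then (\<Sum>k. of_real (f k) * z k) else of_real (t (i-1)) * z (i-1))"

definition a :: "nat \<Rightarrow> real" where "a k = f k * pi 0 k"

definition phi :: "complex \<Rightarrow> complex" where "phi l = (\<Sum>k. of_real (a k) / l^(Suc k))"

definition e0 :: "nat \<Rightarrow> 'a::zero_neq_one" where "e0 = (\<lambda>i. if i = 0 then 1 else 0)"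

lemma a_nonneg: "a k \<ge> 0" using hfpos pi_nonneg by (simp add: a_def)

lemma e0_lp: "e0 \<in> lp_space p" unfolding e0_def by (rule lp_single)

lemma fsum:
  fixes z :: "nat \<Rightarrow> 'a::{real_normed_div_algebra,banach}"
  shows "z \<in> lp_space p \<Longrightarrow> summable (\<lambda>k. of_real (f k) * z k)"
  by (rule holder_summable[OF hp hq hf])

lemma Ac_lp: "z \<in> lp_space p \<Longrightarrow> Ac z \<in> lp_space p"
proof -
  assume z: "z \<in> lp_space p"
  have "(\<lambda>i. of_real (t i) * z i) \<in> lp_space p"
    apply (rule lp_mono[OF z]) using ht by (auto simp: norm_mult intro!: mult_left_le_one_le)
  then have "(\<lambda>i. if i = 0 then (\<Sum>k. of_real (f k) * z k) else of_real (t (i-1)) * z (i-1)) \<in> lp_space p"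
    by (rule lp_shift)
  then show ?thesis by (simp add: Ac_def[abs_def])
qed

lemma fv_eq: "of_real (f k) * RT (l::complex) e0 k = of_real (a k) / l^(Suc k)"
  by (simp add: e0_def RT_e0 a_def)

lemma phi_summable: "norm (l::complex) > c \<Longrightarrow> summable (\<lambda>k. of_real (a k) / l^(Suc k))"
proof -
  assume l: "norm l > c"
  have "summable (\<lambda>k. of_real (f k) * RT l e0 k)"
    by (rule fsum[OF RT_lp[OF l e0_lp]])
  then show ?thesis by (simp add: fv_eq)
qed

lemma phi_sum_fv: "norm (l::complex) > c \<Longrightarrow> (\<Sum>k. of_real (f k) * RT l e0 k) = phi l"
  by (simp add: fv_eq phi_def)

lemma geo_form:
  fixes l :: complex and d :: "nat \<Rightarrow> complex"
  assumes l: "l \<noteq> 0" and rec: "\<And>j. l * d (Suc j) = of_real (t j) * d j"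
  shows "d i = d 0 * of_real (pi 0 i) / l^i"
proof (induction i)
  case 0 then show ?case by simp
next
  case (Suc i)
  have "d (Suc i) = of_real (t i) * d i / l" using rec[of i] l by (simp add: field_simps)
  also have "\<dots> = d 0 * of_real (pi 0 (Suc i)) / l^(Suc i)"
    using Suc l by (simp add: pi_Suc field_simps)
  finally show ?case .
qed

lemma bij_resolvent:
  assumes l: "norm l > c" and ph: "phi l \<noteq> 1"
  shows "bij_betw (\<lambda>z i. l * z i - Ac z i) (lp_space p) (lp_space p)"
proof -
  have l0: "l \<noteq> 0" using l c by auto
  have sph: "summable (\<lambda>k. of_real (a k) / l^(Suc k))" by (rule phi_summable[OF l])
  define \<Phi> where "\<Phi> = (\<lambda>z i. l * z i - Ac z i)"
  have maps: "\<Phi> z \<in> lp_space p" if "z \<in> lp_space p" for z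
    unfolding \<Phi>_def by (intro lp_diff lp_mult Ac_lp that)
  have inj: "inj_on \<Phi> (lp_space p)"
  proof (rule inj_onI)
    fix z z' assume z: "z \<in> lp_space p" and z': "z' \<in> lp_space p" and eq: "\<Phi> z = \<Phi> z'"
    define d where "d i = z i - z' i" for i
    have eqi: "l * z i - Ac z i = l * z' i - Ac z' i" for i
      using eq unfolding \<Phi>_def by meson
    have rec: "l * d (Suc j) = of_real (t j) * d j" for j
      using eqi[of "Suc j"] by (simp add: Ac_def d_def algebra_simps)
    have gf: "d i = d 0 * of_real (pi 0 i) / l^i" for i by (rule geo_form[OF l0 rec])
    have s1: "summable (\<lambda>k. of_real (f k) * z k)" and s2: "summable (\<lambda>k. of_real (f k) * z' k)"
      using fsum z z' by auto
    have "l * d 0 = (\<Sum>k. of_real (f k) * z k) - (\<Sum>k. of_real (f k) * z' k)"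
      using eqi[of 0] by (simp add: Ac_def d_def algebra_simps)
    also have "\<dots> = (\<Sum>k. of_real (f k) * d k)"
      using suminf_diff[OF s1 s2] by (simp add: d_def algebra_simps)
    also have "\<dots> = (\<Sum>k. (d 0 * l) * (of_real (a k) / l^(Suc k)))"
    proof (intro suminf_cong)
      fix k
      show "of_real (f k) * d k = (d 0 * l) * (of_real (a k) / l^(Suc k))"
        using l0 by (subst gf) (simp add: a_def field_simps)
    qed
    also have "\<dots> = d 0 * l * phi l" unfolding phi_def by (rule suminf_mult[OF sph])
    finally have "d 0 * l * (1 - phi l) = 0" by (simp add: algebra_simps)
    then have "d 0 = 0" using l0 ph by simp
    then have "d i = 0" for i using gf[of i] by simp
    then show "z = z'" by (auto simp: d_def)
  qed
  have surj: "\<Phi> ` lp_space p = lp_space p"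
  proof
    show "\<Phi> ` lp_space p \<subseteq> lp_space p" using maps by auto
  next
    show "lp_space p \<subseteq> \<Phi> ` lp_space p"
    proof
      fix w :: "nat \<Rightarrow> complex" assume w: "w \<in> lp_space p"
      define u where "u = RT l w"
      define v where "v = RT l (e0 :: nat \<Rightarrow> complex)"
      have u: "u \<in> lp_space p" unfolding u_def by (rule RT_lp[OF l w])
      have v: "v \<in> lp_space p" unfolding v_def by (rule RT_lp[OF l e0_lp])
      define \<beta> where "\<beta> = (\<Sum>k. of_real (f k) * u k) / (1 - phi l)"
      define z where "z i = u i + \<beta> * v i" for i
      have z: "z \<in> lp_space p" unfolding z_def[abs_def] by (intro lp_add lp_mult u v)
      have su: "summable (\<lambda>k. of_real (f k) * u k)" using fsum u by auto
      have sv: "summable (\<lambda>k. of_real (f k) * v k)" using fsum v by auto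
      have fv: "(\<Sum>k. of_real (f k) * v k) = phi l" unfolding v_def by (rule phi_sum_fv[OF l])
      have "(\<Sum>k. of_real (f k) * z k) = (\<Sum>k. of_real (f k) * u k + \<beta> * (of_real (f k) * v k))"
        by (simp add: z_def algebra_simps)
      also have "\<dots> = (\<Sum>k. of_real (f k) * u k) + \<beta> * phi l"
        using suminf_add[OF su summable_mult[OF sv, of \<beta>]] suminf_mult[OF sv, of \<beta>] fv by simp
      finally have fz: "(\<Sum>k. of_real (f k) * z k) = (\<Sum>k. of_real (f k) * u k) + \<beta> * phi l" .
      have "\<Phi> z i = w i" for i
      proof (cases i)
        case 0
        have z0: "z 0 = w 0 / l + \<beta> * (1/l)" by (simp add: z_def u_def v_def RT_0 e0_def)
        have "\<Phi> z 0 = l * z 0 - (\<Sum>k. of_real (f k) * z k)" by (simp add: \<Phi>_def Ac_def)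
        also have "\<dots> = l * (w 0 / l + \<beta> * (1 / l)) - ((\<Sum>k. of_real (f k) * u k) + \<beta> * phi l)"
          unfolding z0 fz ..
        also have "\<dots> = w 0 + \<beta> * (1 - phi l) - (\<Sum>k. of_real (f k) * u k)"
          using l0 by (simp add: algebra_simps)
        also have "\<dots> = w 0" using ph by (simp add: \<beta>_def)
        finally show ?thesis using 0 by simp
      next
        case (Suc j)
        have u1: "l * u (Suc j) = w (Suc j) + of_real (t j) * u j"
          using RT_Suc[OF l0, of w j] l0 by (simp add: u_def field_simps)
        have v1: "l * v (Suc j) = of_real (t j) * v j"
          using RT_Suc[OF l0, of e0 j] l0 by (simp add: v_def e0_def field_simps)
        have "\<Phi> z (Suc j) = l * u (Suc j) + \<beta> * (l * v (Suc j)) - of_real (t j) * (u j + \<beta> * v j)"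
          by (simp add: \<Phi>_def Ac_def z_def algebra_simps)
        also have "\<dots> = w (Suc j)"
          unfolding u1 v1 by (simp add: algebra_simps)
        finally show ?thesis using Suc by simp
      qed
      then have "w = \<Phi> z" by auto
      then show "w \<in> \<Phi> ` lp_space p" using z by auto
    qed
  qed
  show ?thesis using inj surj by (simp add: bij_betw_def \<Phi>_def)
qed

lemma resolvent_e0:
  assumes l0: "l \<noteq> 0" and z: "z \<in> lp_space p" and eq: "(\<lambda>i. l * z i - Ac z i) = e0"
  shows "summable (\<lambda>k. of_real (a k) / l^(Suc k)) \<and> phi l \<noteq> 1"
proof -
  have eqi: "l * z i - Ac z i = e0 i" for i using fun_cong[OF eq, of i] by simp
  have rec: "l * z (Suc j) = of_real (t j) * z j" for j
    using eqi[of "Suc j"] by (simp add: Ac_def e0_def)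
  have gf: "z i = z 0 * of_real (pi 0 i) / l^i" for i by (rule geo_form[OF l0 rec])
  have fz: "of_real (f k) * z k = (z 0 * l) * (of_real (a k) / l^(Suc k))" for k
    using l0 by (subst gf) (simp add: a_def field_simps)
  have s: "summable (\<lambda>k. of_real (f k) * z k)" using fsum z by auto
  have e: "l * z 0 - (\<Sum>k. of_real (f k) * z k) = 1" using eqi[of 0] by (simp add: Ac_def e0_def)
  have z0: "z 0 \<noteq> 0"
  proof
    assume "z 0 = 0"
    then have h0: "\<And>k. of_real (f k) * z k = 0" using fz by simp
    have "(\<lambda>k. of_real (f k) * z k) = (\<lambda>k. 0)" by (rule ext) (rule h0)
    then have "(\<Sum>k. of_real (f k) * z k) = 0" by simp
    then show False using e \<open>z 0 = 0\<close> by simp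
  qed
  have "summable (\<lambda>k. (z 0 * l) * (of_real (a k) / l^(Suc k)))"
    using s unfolding fz .
  then have sa: "summable (\<lambda>k. of_real (a k) / l^(Suc k))"
    by (subst (asm) summable_cmult_iff) (use z0 l0 in auto)
  have h: "(\<Sum>k. of_real (f k) * z k) = z 0 * l * phi l"
    unfolding fz phi_def by (rule suminf_mult[OF sa])
  have "z 0 * l * (1 - phi l) = l * z 0 - (\<Sum>k. of_real (f k) * z k)"
    unfolding h by (simp add: algebra_simps)
  also have "\<dots> = 1" by (rule e)
  finally have "z 0 * l * (1 - phi l) = 1" .
  then have "phi l \<noteq> 1" by auto
  then show ?thesis using sa by simp
qed

end


context LS begin

definition specA :: "complex set" where
  "specA = {l. \<not> bij_betw (\<lambda>z i. l * z i - Ac z i) (lp_space p) (lp_space p)}"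

lemma notin_specA: "norm l > c \<Longrightarrow> phi l \<noteq> 1 \<Longrightarrow> l \<notin> specA"
  using bij_resolvent by (simp add: specA_def)

lemma notspec_phi:
  assumes "l \<noteq> 0" "l \<notin> specA"
  shows "summable (\<lambda>k. of_real (a k) / l^(Suc k)) \<and> phi l \<noteq> 1"
proof -
  have b: "bij_betw (\<lambda>z i. l * z i - Ac z i) (lp_space p) (lp_space p)" using assms by (simp add: specA_def)
  have "(e0 :: nat \<Rightarrow> complex) \<in> lp_space p" by (rule e0_lp)
  then have "e0 \<in> (\<lambda>z i. l * z i - Ac z i) ` lp_space p" using b by (simp add: bij_betw_def)
  then obtain z where z: "z \<in> lp_space p" "e0 = (\<lambda>i. l * z i - Ac z i)"
    by blast
  show ?thesis by (rule resolvent_e0[OF assms(1) z(1) z(2)[symmetric]])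
qed

lemma zero_in_specA: "0 \<in> specA"
proof (rule ccontr)
  assume "0 \<notin> specA"
  then have b: "bij_betw (\<lambda>z i. 0 * z i - Ac z i) (lp_space p) (lp_space p)" by (simp add: specA_def)
  show False
  proof (cases "\<exists>j. t j = 0")
    case True
    then obtain j where j: "t j = 0" by auto
    have "(\<lambda>i. if i = Suc j then (1::complex) else 0) \<in> lp_space p" by (rule lp_single)
    then have "(\<lambda>i. if i = Suc j then (1::complex) else 0) \<in> (\<lambda>z i. 0 * z i - Ac z i) ` lp_space p"
      using b by (simp add: bij_betw_def)
    then obtain z where "z \<in> lp_space p" "(\<lambda>i. if i = Suc j then 1 else 0) = (\<lambda>i. 0 * z i - Ac z i)"
      by blast
    then have "0 * z (Suc j) - Ac z (Suc j) = 1" by (metis (mono_tags) fun_cong)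
    then show False using j by (simp add: Ac_def)
  next
    case False
    have "(e0 :: nat \<Rightarrow> complex) \<in> lp_space p" by (rule e0_lp)
    then have "e0 \<in> (\<lambda>z i. 0 * z i - Ac z i) ` lp_space p" using b by (simp add: bij_betw_def)
    then obtain z where z: "z \<in> lp_space p" "e0 = (\<lambda>i. 0 * z i - Ac z i)"
      by blast
    have zi: "z j = 0" for j
    proof -
      have "0 * z (Suc j) - Ac z (Suc j) = e0 (Suc j)" using fun_cong[OF z(2)[symmetric]] by simp
      then show ?thesis using False by (simp add: Ac_def e0_def)
    qed
    have "0 * z 0 - Ac z 0 = e0 0" using fun_cong[OF z(2)[symmetric]] by simp
    then show False using zi by (simp add: Ac_def e0_def)
  qed
qed

definition Qf :: "real \<Rightarrow> real" where "Qf m = (\<Sum>k. a k * m^k)"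
definition Pf :: "real \<Rightarrow> real" where "Pf m = m * Qf m"

lemma Q_summable:
  assumes "0 \<le> m" "m * c < 1"
  shows "summable (\<lambda>k. a k * m^k)"
proof (cases "m = 0")
  case True then show ?thesis using summable_0_powser[of a] by simp
next
  case False
  then have m: "m > 0" using assms by simp
  define l where "l = 1 / m"
  have l: "norm l > c" using m assms by (simp add: l_def field_simps)
  have "summable (\<lambda>k. f k * RT l e0 k)"
    using fsum[OF RT_lp[OF l e0_lp]] by simp
  moreover have "f k * RT l e0 k = m * (a k * m^k)" for k
    using m by (simp add: RT_e0 e0_def a_def l_def field_simps power_divide)
  ultimately have "summable (\<lambda>k. m * (a k * m^k))" by simp
  then show ?thesis using m by simp
qed

lemma Pf_sum: "summable (\<lambda>k. a k * m^k) \<Longrightarrow> Pf m = (\<Sum>k. a k * m^(Suc k))"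
  unfolding Pf_def Qf_def by (subst suminf_mult[symmetric]) (auto simp: algebra_simps)

lemma P_summable: "summable (\<lambda>k. a k * m^k) \<Longrightarrow> summable (\<lambda>k. a k * m^(Suc k))"
  using summable_mult[of "\<lambda>k. a k * m^k" m] by (simp add: algebra_simps)

lemma P_cont:
  assumes "summable (\<lambda>k. a k * K^k)" "0 \<le> m" "m < K"
  shows "isCont Pf m"
proof -
  have "isCont (\<lambda>x. \<Sum>n. a n * x^n) m"
    by (rule isCont_powser[OF assms(1)]) (use assms in auto)
  then show ?thesis unfolding Pf_def[abs_def] Qf_def by (intro continuous_intros)
qed

lemma Pf_mono:
  assumes "0 \<le> m" "m \<le> m'" "summable (\<lambda>k. a k * m'^k)"
  shows "Pf m \<le> Pf m'"
proof -
  have s: "summable (\<lambda>k. a k * m^k)"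
    by (rule summable_comparison_test[OF _ assms(3)])
       (use assms a_nonneg in \<open>auto intro!: mult_left_mono power_mono\<close>)
  show ?thesis unfolding Pf_sum[OF s] Pf_sum[OF assms(3)]
    by (rule suminf_le) (use assms a_nonneg P_summable s in \<open>auto intro!: mult_left_mono power_mono simp del: power_Suc\<close>)
qed

lemma Pf_strict:
  assumes "0 \<le> m" "m < m'" "summable (\<lambda>k. a k * m'^k)" "a j > 0"
  shows "Pf m < Pf m'"
proof -
  have s: "summable (\<lambda>k. a k * m^k)"
    by (rule summable_comparison_test[OF _ assms(3)])
       (use assms a_nonneg in \<open>auto intro!: mult_left_mono power_mono\<close>)
  have d: "summable (\<lambda>k. a k * m'^(Suc k) - a k * m^(Suc k))"
    using P_summable[OF s] P_summable[OF assms(3)] by (intro summable_diff)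
  have "0 < (\<Sum>k. a k * m'^(Suc k) - a k * m^(Suc k))"
  proof (subst suminf_pos_iff[OF d])
    show "0 \<le> a k * m'^(Suc k) - a k * m^(Suc k)" for k
      using assms a_nonneg[of k] by (auto intro!: mult_left_mono power_mono simp del: power_Suc)
    have "m^(Suc j) < m'^(Suc j)" using assms by (intro power_strict_mono) auto
    then show "\<exists>i. 0 < a i * m'^(Suc i) - a i * m^(Suc i)"
      using assms by (intro exI[of _ j]) (simp del: power_Suc)
  qed
  also have "\<dots> = Pf m' - Pf m"
    unfolding Pf_sum[OF s] Pf_sum[OF assms(3)] using suminf_diff[OF P_summable[OF assms(3)] P_summable[OF s]] by simp
  finally show ?thesis by simp
qed

lemma phi_real:
  assumes "m > 0" "summable (\<lambda>k. a k * m^k)"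
  shows "phi (of_real (1/m)) = of_real (Pf m)"
proof -
  have "of_real (Pf m) = (\<Sum>k. complex_of_real (a k * m^(Suc k)))"
    unfolding Pf_sum[OF assms(2)] by (rule suminf_of_real[OF P_summable[OF assms(2)]])
  also have "\<dots> = phi (of_real (1/m))"
    unfolding phi_def using assms(1) by (intro suminf_cong) (simp add: field_simps power_divide)
  finally show ?thesis by simp
qed

lemma phi_norm:
  assumes l: "norm l > c"
  shows "norm (phi l) \<le> Pf (1 / norm l)"
proof -
  have l0: "norm l > 0" using l c by linarith
  have s: "summable (\<lambda>k. a k * (1/norm l)^k)" by (rule Q_summable) (use l0 l in \<open>auto simp: field_simps\<close>)
  show ?thesis unfolding phi_def Pf_sum[OF s]
    apply (rule norm_suminf_le[OF _ P_summable[OF s]])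
    using a_nonneg by (simp add: norm_divide norm_power power_divide del: power_Suc)
qed

lemma summable_phi_real:
  assumes "m > 0" "summable (\<lambda>k. of_real (a k) / (of_real (1/m) :: complex)^(Suc k))"
  shows "summable (\<lambda>k. a k * m^k)"
proof -
  have "of_real (a k) / (of_real (1/m) :: complex)^(Suc k) = of_real (m * (a k * m^k))" for k
  proof -
    have "(of_real (1/m) :: complex)^(Suc k) = of_real (1 / m^(Suc k))"
      by (simp add: power_divide del: power_Suc)
    then have "of_real (a k) / (of_real (1/m) :: complex)^(Suc k) = of_real (a k / (1 / m^(Suc k)))"
      by (simp only: of_real_divide)
    also have "a k / (1 / m^(Suc k)) = m * (a k * m^k)" by simp
    finally show ?thesis .
  qed
  then have "summable (\<lambda>k. complex_of_real (m * (a k * m^k)))" using assms(2) by simp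
  then have "summable (\<lambda>k. m * (a k * m^k))" by (simp only: summable_complex_of_real)
  then show ?thesis using assms(1) by simp
qed

end


context LS begin

lemma specA_ne: "specA \<noteq> {}" using zero_in_specA by auto

lemma rad_le: "(\<And>l. l \<in> specA \<Longrightarrow> cmod l \<le> B) \<Longrightarrow> Sup (cmod ` specA) \<le> B"
  using specA_ne by (intro cSup_least) auto

lemma rad_ge: "l \<in> specA \<Longrightarrow> (\<And>l. l \<in> specA \<Longrightarrow> cmod l \<le> B) \<Longrightarrow> cmod l \<le> Sup (cmod ` specA)"
  by (intro cSup_upper) (auto intro!: bdd_aboveI[where M=B])

definition K1 :: real where "K1 = (1 + 1/c) / 2"

lemma K1: "1 < K1" "K1 * c < 1" "K1 < 1/c"
  using c by (auto simp: K1_def field_simps)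

lemma sK1: "summable (\<lambda>k. a k * K1^k)"
  by (rule Q_summable) (use K1 c in auto)

lemma cont_K1: "0 \<le> m \<Longrightarrow> m < K1 \<Longrightarrow> isCont Pf m"
  by (rule P_cont[OF sK1])

lemma s_le_K1: "0 \<le> m \<Longrightarrow> m \<le> K1 \<Longrightarrow> summable (\<lambda>k. a k * m^k)"
  by (rule Q_summable) (use K1 c in \<open>auto intro: le_less_trans[OF mult_right_mono]\<close>)

lemma s1: "summable (\<lambda>k. a k * 1^k)" using s_le_K1[of 1] K1 by simp

lemma R0_eq: "Pf 1 = (\<Sum>k. a k)" using Pf_sum[OF s1] by simp

lemma R0_summable: "summable a" using s1 by simp

lemma Pf_le_lin: "0 \<le> m \<Longrightarrow> m \<le> 1 \<Longrightarrow> Pf m \<le> m * (\<Sum>k. a k)"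
proof -
  assume m: "0 \<le> m" "m \<le> 1"
  have s: "summable (\<lambda>k. a k * m^k)" using s_le_K1[of m] m K1 by simp
  have "Pf m = (\<Sum>k. a k * m^(Suc k))" by (rule Pf_sum[OF s])
  also have "\<dots> \<le> (\<Sum>k. m * a k)"
  proof (rule suminf_le[OF _ P_summable[OF s]])
    show "summable (\<lambda>k. m * a k)" using R0_summable by simp
    fix k
    have "m^k \<le> 1" using m by (simp add: power_le_one)
    then have "m * m^k \<le> m" using m by (simp add: mult_left_le)
    then have "a k * (m * m^k) \<le> a k * m" using a_nonneg[of k] by (rule mult_left_mono)
    then show "a k * m^(Suc k) \<le> m * a k" by (simp add: mult.commute)
  qed
  also have "\<dots> = m * (\<Sum>k. a k)" by (rule suminf_mult[OF R0_summable])
  finally show ?thesis .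
qed

lemma pos_coeff: "(\<Sum>k. a k) > 0 \<Longrightarrow> \<exists>j. a j > 0"
  using suminf_pos_iff[OF R0_summable] a_nonneg by blast

lemma real_in_spec:
  assumes m: "m > 0" "summable (\<lambda>k. a k * m^k)" "Pf m = 1"
  shows "complex_of_real (1/m) \<in> specA"
proof (rule ccontr)
  assume "complex_of_real (1/m) \<notin> specA"
  then have "phi (of_real (1/m)) \<noteq> 1" using notspec_phi m by auto
  then show False using phi_real[OF m(1,2)] m(3) by simp
qed

lemma big_notin:
  assumes "cmod l > 1 / m" "1/m > c" "m > 0" "m \<le> K1" "Pf m \<le> 1" "\<exists>j. a j > 0"
  shows "l \<notin> specA"
proof -
  have l: "cmod l > c" using assms by linarith
  have l0: "cmod l > 0" using assms(1,3) by (smt (verit) divide_pos_pos)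
  have lt: "1 / cmod l < m" using assms l0 by (simp add: field_simps)
  obtain j where j: "a j > 0" using assms by auto
  have "norm (phi l) \<le> Pf (1 / cmod l)" by (rule phi_norm[OF l])
  also have "\<dots> < Pf m" by (rule Pf_strict[OF _ lt s_le_K1 j]) (use assms l0 in auto)
  finally have "phi l \<noteq> 1" using assms by auto
  then show ?thesis using notin_specA[OF l] by simp
qed

lemma case_ge1:
  assumes R: "(\<Sum>k. a k) \<ge> 1"
  shows "((\<Sum>k. a k) \<ge> Sup (cmod ` specA) \<and> Sup (cmod ` specA) > 1) \<or>
         ((\<Sum>k. a k) = 1 \<and> Sup (cmod ` specA) = 1)"
proof -
  define R0 where "R0 = (\<Sum>k. a k)"
  have R01: "R0 \<ge> 1" using R by (simp add: R0_def)
  define m2 where "m2 = 1 / (2 * R0)"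
  have m2: "0 < m2" "m2 \<le> 1" using R01 by (auto simp: m2_def field_simps)
  have "Pf m2 \<le> m2 * R0" using Pf_le_lin[OF _ m2(2)] m2 by (simp add: R0_def)
  also have "\<dots> \<le> 1" using R01 by (simp add: m2_def)
  finally have P2: "Pf m2 \<le> 1" .
  have P1: "1 \<le> Pf 1" using R01 R0_eq by (simp add: R0_def)
  have "continuous_on {m2..1} Pf"
    by (intro continuous_at_imp_continuous_on ballI cont_K1) (use m2 K1 in auto)
  then obtain ms where ms: "m2 \<le> ms" "ms \<le> 1" "Pf ms = 1"
    using IVT'[of Pf m2 1 1] P2 P1 m2 by auto
  have ms0: "ms > 0" using ms m2 by simp
  have sms: "summable (\<lambda>k. a k * ms^k)" using s_le_K1[of ms] ms ms0 K1 by simp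
  define L where "L = 1 / ms"
  have L1: "L \<ge> 1" using ms ms0 by (simp add: L_def)
  have inspec: "complex_of_real L \<in> specA" unfolding L_def by (rule real_in_spec[OF ms0 sms ms(3)])
  have jpos: "\<exists>j. a j > 0" using pos_coeff R01 by (simp add: R0_def)
  have bound: "cmod l \<le> L" if "l \<in> specA" for l
  proof (rule ccontr)
    assume "\<not> cmod l \<le> L"
    then have "cmod l > 1 / ms" by (simp add: L_def)
    moreover have "1 / ms > c" using L1 c by (simp add: L_def)
    ultimately have "l \<notin> specA" using big_notin[where l=l and m=ms] ms ms0 K1 jpos by auto
    then show False using that by simp
  qed
  have rad: "Sup (cmod ` specA) = L"
    using rad_le[OF bound] rad_ge[OF inspec bound] L1 by simp
  have "1 \<le> ms * R0" using Pf_le_lin[of ms] ms ms0 by (simp add: R0_def)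
  then have RL: "L \<le> R0" using ms0 by (simp add: L_def field_simps)
  show ?thesis
  proof (cases "R0 = 1")
    case True
    then show ?thesis using RL L1 rad by (simp add: R0_def)
  next
    case False
    have "L \<noteq> 1"
    proof
      assume "L = 1"
      then have "ms = 1" using ms0 by (simp add: L_def)
      then show False using ms(3) R0_eq False by (simp add: R0_def)
    qed
    then show ?thesis using RL L1 rad by (simp add: R0_def)
  qed
qed

end


context LS begin

lemma big_notin2:
  assumes "cmod l > 1 / m" "1/m > c" "m > 0" "m \<le> K1" "Pf m < 1"
  shows "l \<notin> specA"
proof -
  have l: "cmod l > c" using assms by linarith
  have l0: "cmod l > 0" using assms(1,3) by (smt (verit) divide_pos_pos)
  have lt: "1 / cmod l < m" using assms l0 by (simp add: field_simps)
  have "norm (phi l) \<le> Pf (1 / cmod l)" by (rule phi_norm[OF l])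
  also have "\<dots> \<le> Pf m" by (rule Pf_mono[OF _ _ s_le_K1]) (use assms l0 lt in auto)
  finally have "phi l \<noteq> 1" using assms by auto
  then show ?thesis using notin_specA[OF l] by simp
qed

lemma lower_exists:
  assumes R: "(\<Sum>k. a k) < 1"
  shows "\<exists>l\<in>specA. cmod l \<ge> (\<Sum>k. a k)"
proof -
  define R0 where "R0 = (\<Sum>k. a k)"
  have R00: "R0 \<ge> 0" using R0_summable a_nonneg by (simp add: R0_def suminf_nonneg)
  show ?thesis
  proof (cases "R0 = 0")
    case True
    then show ?thesis using zero_in_specA by (intro bexI[of _ 0]) (auto simp: R0_def)
  next
    case False
    then have Rp: "R0 > 0" using R00 by simp
    have R1: "R0 < 1" using R by (simp add: R0_def)
    show ?thesis
    proof (rule ccontr)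
      assume H: "\<not> ?thesis"
      have nots: "complex_of_real L \<notin> specA" if "R0 \<le> L" for L
        using H that by (auto simp: R0_def)
      define K0 where "K0 = 1 / R0"
      have K0: "K0 > 1" using Rp R1 by (simp add: K0_def)
      have "summable (\<lambda>k. of_real (a k) / (complex_of_real R0)^(Suc k)) \<and> phi (of_real R0) \<noteq> 1"
        using notspec_phi[OF _ nots[OF order_refl]] Rp by simp
      then have h1: "summable (\<lambda>k. of_real (a k) / (complex_of_real (1/K0))^(Suc k))"
         and h2: "phi (of_real (1/K0)) \<noteq> 1" by (auto simp: K0_def)
      have sK0: "summable (\<lambda>k. a k * K0^k)" by (rule summable_phi_real) (use h1 K0 in auto)
      have "of_real (Pf K0) \<noteq> (1::complex)" using h2 phi_real[OF _ sK0] K0 by simp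
      then have PK0ne: "Pf K0 \<noteq> 1" by simp
      have "Pf K0 \<ge> 1"
      proof -
        have "(\<Sum>k. (1/R0) * a k) \<le> (\<Sum>k. a k * K0^(Suc k))"
        proof (rule suminf_le)
          show "summable (\<lambda>k. (1/R0) * a k)" using R0_summable by simp
          show "summable (\<lambda>k. a k * K0^(Suc k))" by (rule P_summable[OF sK0])
          fix k
          have "1 \<le> K0^k" using K0 by (simp add: one_le_power)
          then have "K0 \<le> K0 * K0^k" using K0 by simp
          then have "a k * K0 \<le> a k * (K0 * K0^k)" using a_nonneg[of k] by (rule mult_left_mono)
          then show "(1/R0) * a k \<le> a k * K0^(Suc k)" by (simp add: K0_def mult.commute)
        qed
        moreover have "(\<Sum>k. (1/R0) * a k) = 1"
          using suminf_mult[OF R0_summable, of "1/R0"] Rp by (simp add: R0_def)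
        ultimately show ?thesis using Pf_sum[OF sK0] by simp
      qed
      then have PK0: "Pf K0 > 1" using PK0ne by simp
      have sP: "(\<lambda>k. a k * K0^(Suc k)) sums Pf K0"
        using Pf_sum[OF sK0] P_summable[OF sK0] by (simp add: summable_sums)
      then have "(\<lambda>n. \<Sum>k<n. a k * K0^(Suc k)) \<longlonglongrightarrow> Pf K0" by (simp add: sums_def)
      then have "eventually (\<lambda>n. (\<Sum>k<n. a k * K0^(Suc k)) > 1) sequentially"
        using PK0 by (rule order_tendstoD)
      then obtain n where n: "(\<Sum>k<n. a k * K0^(Suc k)) > 1" by (auto simp: eventually_sequentially)
      define h where "h x = (\<Sum>k<n. a k * x^(Suc k))" for x :: real
      have "isCont h K0" unfolding h_def[abs_def] by (intro continuous_intros)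
      then have "h \<midarrow>K0\<rightarrow> h K0" by (simp add: isCont_def)
      from LIM_D[OF this, of "h K0 - 1"] n obtain s where
        s: "s > 0" "\<And>x. x \<noteq> K0 \<and> norm (x - K0) < s \<Longrightarrow> norm (h x - h K0) < h K0 - 1"
        by (auto simp: h_def)
      define m1 where "m1 = K0 - min (s/2) ((K0 - 1)/2)"
      have m1: "1 < m1" "m1 < K0" using s K0 unfolding m1_def by (auto simp: min_def field_simps)
      have "norm (h m1 - h K0) < h K0 - 1" using s m1 by (intro s(2)) (auto simp: m1_def min_def)
      then have hm1: "h m1 > 1" by simp
      have sm1: "summable (\<lambda>k. a k * m1^k)"
        by (rule summable_comparison_test[OF _ sK0])
           (use m1 a_nonneg in \<open>auto intro!: mult_left_mono power_mono\<close>)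
      have "h m1 \<le> Pf m1" unfolding h_def Pf_sum[OF sm1]
        by (rule sum_le_suminf[OF P_summable[OF sm1]]) (use m1 a_nonneg in auto)
      then have Pm1: "Pf m1 \<ge> 1" using hm1 by simp
      have P1: "Pf 1 \<le> 1" using R0_eq R1 by (simp add: R0_def)
      have "continuous_on {1..m1} Pf"
        by (intro continuous_at_imp_continuous_on ballI P_cont[OF sK0]) (use m1 in auto)
      then obtain mu where mu: "1 \<le> mu" "mu \<le> m1" "Pf mu = 1"
        using IVT'[of Pf 1 1 m1] P1 Pm1 m1 by auto
      have smu: "summable (\<lambda>k. a k * mu^k)"
        by (rule summable_comparison_test[OF _ sK0])
           (use mu m1 a_nonneg in \<open>auto intro!: mult_left_mono power_mono\<close>)
      have "complex_of_real (1/mu) \<in> specA" by (rule real_in_spec[OF _ smu mu(3)]) (use mu in auto)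
      moreover have "R0 \<le> 1/mu"
      proof -
        have "mu < 1/R0" using mu m1 by (simp add: K0_def)
        then show ?thesis using Rp mu by (simp add: field_simps)
      qed
      ultimately show False using nots by blast
    qed
  qed
qed

lemma case_lt1:
  assumes R: "(\<Sum>k. a k) < 1"
  shows "(\<Sum>k. a k) \<le> Sup (cmod ` specA) \<and> Sup (cmod ` specA) < 1"
proof -
  define R0 where "R0 = (\<Sum>k. a k)"
  have R1: "R0 < 1" using R by (simp add: R0_def)
  have "isCont Pf 1" by (rule cont_K1) (use K1 in auto)
  then have "Pf \<midarrow>1\<rightarrow> Pf 1" by (simp add: isCont_def)
  from LIM_D[OF this, of "1 - R0"] R1 obtain s where
    s: "s > 0" "\<And>x. x \<noteq> 1 \<and> norm (x - 1) < s \<Longrightarrow> norm (Pf x - Pf 1) < 1 - R0"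
    by auto
  define mr where "mr = 1 + min (s/2) ((K1 - 1)/2)"
  have mr: "1 < mr" "mr < K1" using s K1 unfolding mr_def by (auto simp: min_def field_simps)
  have "norm (Pf mr - Pf 1) < 1 - R0" using s mr by (intro s(2)) (auto simp: mr_def min_def)
  then have Pmr: "Pf mr < 1" using R0_eq by (simp add: R0_def)
  have c_lt: "1 / mr > c"
  proof -
    have "mr * c < 1" using mr K1 c by (smt (verit) mult_right_mono)
    then show ?thesis using mr by (simp add: field_simps)
  qed
  have bound: "cmod l \<le> 1 / mr" if "l \<in> specA" for l
    using big_notin2[where l=l and m=mr] that c_lt mr Pmr by force
  have up: "Sup (cmod ` specA) \<le> 1 / mr" by (rule rad_le[OF bound])
  have "1 / mr < 1" using mr by simp
  moreover obtain l where l: "l \<in> specA" "cmod l \<ge> R0" using lower_exists R by (auto simp: R0_def)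
  moreover have "cmod l \<le> Sup (cmod ` specA)" by (rule rad_ge[OF l(1) bound])
  ultimately show ?thesis using up by (simp add: R0_def)
qed

end


lemma lp_Re: "z \<in> lp_space p \<Longrightarrow> (\<lambda>j. Re (z j)) \<in> lp_space p"
  by (rule lp_mono) (auto simp: abs_Re_le_cmod)

lemma lp_Im: "z \<in> lp_space p \<Longrightarrow> (\<lambda>j. Im (z j)) \<in> lp_space p"
  by (rule lp_mono) (auto simp: abs_Im_le_cmod)

context LS begin

definition Tm :: "(nat \<Rightarrow> real) \<Rightarrow> nat \<Rightarrow> real" where
  "Tm x i = (if i = 0 then 0 else t (i-1) * x (i-1))"

definition Fm :: "(nat \<Rightarrow> real) \<Rightarrow> nat \<Rightarrow> real" where
  "Fm x i = (if i = 0 then (\<Sum>k. f k * x k) else 0)"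

lemma IT_inj: "inj_on (\<lambda>x i. x i - Tm x i) S"
proof (rule inj_onI)
  fix x y assume eq: "(\<lambda>i. x i - Tm x i) = (\<lambda>i. y i - Tm y i)"
  have e: "x i - Tm x i = y i - Tm y i" for i using fun_cong[OF eq, of i] by simp
  have "x i = y i" for i
  proof (induction i)
    case 0 then show ?case using e[of 0] by (simp add: Tm_def)
  next
    case (Suc i) then show ?case using e[of "Suc i"] by (simp add: Tm_def)
  qed
  then show "x = y" by auto
qed

lemma IT_RT: "(\<lambda>i. RT 1 y i - Tm (RT 1 y) i) = (y :: nat \<Rightarrow> real)"
proof
  fix i show "RT 1 y i - Tm (RT 1 y) i = y i"
    by (cases i) (simp_all add: Tm_def RT_0 RT_Suc)
qed

lemma one_gt_c: "norm (1::'a::real_normed_field) > c" using c by simp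

lemma inv_eq:
  assumes "y \<in> lp_space p"
  shows "the_inv_into (lp_space p) (\<lambda>x i. x i - Tm x i) y = RT 1 y"
  by (rule the_inv_into_f_eq[OF IT_inj IT_RT RT_lp[OF one_gt_c assms]])

definition gam :: "(nat \<Rightarrow> complex) \<Rightarrow> complex" where
  "gam z = (\<Sum>k. of_real (f k) * RT 1 z k)"

lemma e0_0[simp]: "e0 0 = 1" and e0_nz: "i \<noteq> 0 \<Longrightarrow> e0 i = 0"
  by (auto simp: e0_def)

lemma gam_summable: "(z :: nat \<Rightarrow> complex) \<in> lp_space p \<Longrightarrow> summable (\<lambda>k. of_real (f k) * RT 1 z k)"
  by (rule fsum[OF RT_lp[OF one_gt_c]])

lemma gam_add: "z \<in> lp_space p \<Longrightarrow> z' \<in> lp_space p \<Longrightarrow> gam (\<lambda>i. z i + z' i) = gam z + gam z'"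
  unfolding gam_def RT_add by (subst suminf_add[OF gam_summable gam_summable]) (auto simp: algebra_simps)

lemma gam_diff: "z \<in> lp_space p \<Longrightarrow> z' \<in> lp_space p \<Longrightarrow> gam (\<lambda>i. z i - z' i) = gam z - gam z'"
  unfolding gam_def RT_diff by (subst suminf_diff[OF gam_summable gam_summable]) (auto simp: algebra_simps)

lemma gam_mult: "z \<in> lp_space p \<Longrightarrow> gam (\<lambda>i. b * z i) = b * gam z"
  unfolding gam_def RT_mult by (subst suminf_mult[OF gam_summable, symmetric]) (auto simp: algebra_simps)

definition R0 :: real where "R0 = (\<Sum>k. a k)"

lemma R0_nonneg: "R0 \<ge> 0" unfolding R0_def by (intro suminf_nonneg R0_summable a_nonneg)

lemma gam_e0: "gam e0 = of_real R0"
proof -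
  have "gam e0 = phi 1" unfolding gam_def by (rule phi_sum_fv) (use c in simp)
  also have "\<dots> = of_real (Pf 1)" using phi_real[of 1] s1 by simp
  finally show ?thesis by (simp add: R0_eq R0_def)
qed

lemma gam_zero: "gam (\<lambda>i. 0) = 0"
  using gam_mult[OF lp_zero, of 0] by simp

definition specG :: "complex set" where
  "specG = {l. \<not> bij_betw (\<lambda>z i. l * z i - (if i = 0 then gam z else 0)) (lp_space p) (lp_space p)}"

lemma specG_sub: "specG \<subseteq> {0, of_real R0}"
proof
  fix l assume ls: "l \<in> specG"
  show "l \<in> {0, of_real R0}"
  proof (rule ccontr)
    assume "l \<notin> {0, of_real R0}"
    then have l0: "l \<noteq> 0" and lR: "l \<noteq> of_real R0" by auto
    define \<Psi> where "\<Psi> = (\<lambda>z i. l * z i - (if i = 0 then gam z else 0))"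
    have maps: "\<Psi> z \<in> lp_space p" if "z \<in> lp_space p" for z
      unfolding \<Psi>_def by (intro lp_diff lp_mult that lp_single)
    have inj: "inj_on \<Psi> (lp_space p)"
    proof (rule inj_onI)
      fix z z' assume z: "z \<in> lp_space p" and z': "z' \<in> lp_space p" and eq: "\<Psi> z = \<Psi> z'"
      have e: "\<Psi> z i = \<Psi> z' i" for i using eq by simp
      define d where "d i = z i - z' i" for i
      have dS: "d i = 0" if "i \<noteq> 0" for i using e[of i] that l0 by (simp add: \<Psi>_def d_def)
      have dd: "d = (\<lambda>i. d 0 * e0 i)" using dS by (auto simp: e0_def)
      have "l * d 0 = gam z - gam z'" using e[of 0] by (simp add: \<Psi>_def d_def algebra_simps)
      also have "\<dots> = gam d" unfolding d_def[abs_def] by (rule gam_diff[OF z z', symmetric])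
      also have "\<dots> = d 0 * of_real R0"
        by (subst dd) (simp add: gam_mult[OF e0_lp] gam_e0)
      finally have "(l - of_real R0) * d 0 = 0" by (simp add: algebra_simps)
      then have "d 0 = 0" using lR by simp
      then have "d i = 0" for i using dS by (cases "i = 0") auto
      then show "z = z'" by (auto simp: d_def)
    qed
    have surj: "lp_space p \<subseteq> \<Psi> ` lp_space p"
    proof
      fix w :: "nat \<Rightarrow> complex" assume w: "w \<in> lp_space p"
      define \<beta> where "\<beta> = gam w / (l - of_real R0)"
      define z where "z i = (1/l) * (w i + \<beta> * e0 i)" for i
      have we: "(\<lambda>i. \<beta> * e0 i) \<in> lp_space p" by (intro lp_mult e0_lp)
      have z: "z \<in> lp_space p" unfolding z_def[abs_def] by (intro lp_mult lp_add w we)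
      have "gam z = (1/l) * gam (\<lambda>i. w i + \<beta> * e0 i)"
        unfolding z_def[abs_def] by (rule gam_mult[OF lp_add[OF w we]])
      also have "gam (\<lambda>i. w i + \<beta> * e0 i) = gam w + gam (\<lambda>i. \<beta> * e0 i)" by (rule gam_add[OF w we])
      also have "gam (\<lambda>i. \<beta> * e0 i) = \<beta> * gam e0" by (rule gam_mult[OF e0_lp])
      finally have gz: "gam z = (1/l) * (gam w + \<beta> * of_real R0)" by (simp add: gam_e0)
      have "\<Psi> z i = w i" for i
      proof (cases "i = 0")
        case True
        have "\<Psi> z 0 = w 0 + \<beta> - (1/l) * (gam w + \<beta> * of_real R0)"
          using l0 by (simp add: \<Psi>_def gz z_def e0_def field_simps)
        also have "\<dots> = w 0 + (\<beta> * (l - of_real R0) - gam w) / l"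
          using l0 by (simp add: field_simps)
        also have "\<beta> * (l - of_real R0) = gam w" using lR by (simp add: \<beta>_def)
        also have "w 0 + (gam w - gam w) / l = w 0" by simp
        finally show ?thesis using True by simp
      next
        case False then show ?thesis using l0 by (simp add: \<Psi>_def z_def e0_def)
      qed
      then have "w = \<Psi> z" by auto
      then show "w \<in> \<Psi> ` lp_space p" using z by auto
    qed
    have "bij_betw \<Psi> (lp_space p) (lp_space p)"
      using inj surj maps by (auto simp: bij_betw_def)
    then show False using ls by (simp add: specG_def \<Psi>_def)
  qed
qed

lemma zero_in_specG: "0 \<in> specG"
proof -
  have "(\<lambda>i. if i = 1 then (1::complex) else 0) \<in> lp_space p" by (rule lp_single)
  moreover have "(\<lambda>i. if i = 1 then (1::complex) else 0) \<notin> (\<lambda>z i. 0 * z i - (if i = 0 then gam z else 0)) ` lp_space p"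
  proof
    assume "(\<lambda>i. if i = 1 then (1::complex) else 0) \<in> (\<lambda>z i. 0 * z i - (if i = 0 then gam z else 0)) ` lp_space p"
    then obtain z where "(\<lambda>i. if i = 1 then (1::complex) else 0) = (\<lambda>i. 0 * z i - (if i = 0 then gam z else 0))" by blast
    from fun_cong[OF this, of 1] show False by simp
  qed
  ultimately show ?thesis by (auto simp: specG_def bij_betw_def)
qed

lemma R0_in_specG: "of_real R0 \<in> specG"
proof -
  let ?\<Psi> = "\<lambda>z i. of_real R0 * z i - (if i = 0 then gam z else 0)"
  have "?\<Psi> e0 = ?\<Psi> (\<lambda>i. 0)"
  proof
    fix i show "?\<Psi> e0 i = ?\<Psi> (\<lambda>i. 0) i" by (cases "i = 0") (simp_all add: gam_e0 gam_zero e0_nz)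
  qed
  moreover have "(e0 :: nat \<Rightarrow> complex) \<noteq> (\<lambda>i. 0)" by (auto simp: e0_def fun_eq_iff)
  ultimately have "\<not> inj_on ?\<Psi> (lp_space p)"
  proof (intro notI)
    assume eq: "?\<Psi> e0 = ?\<Psi> (\<lambda>i. 0)" and ne: "(e0 :: nat \<Rightarrow> complex) \<noteq> (\<lambda>i. 0)"
      and inj: "inj_on ?\<Psi> (lp_space p)"
    have "e0 = (\<lambda>i. 0 :: complex)" by (rule inj_onD[OF inj eq e0_lp lp_zero])
    then show False using ne by simp
  qed
  then show ?thesis by (auto simp: specG_def bij_betw_def)
qed

lemma specG_eq: "specG = {0, of_real R0}"
  using specG_sub zero_in_specG R0_in_specG by auto

lemma radG: "Sup (cmod ` specG) = R0"
proof -
  have "cmod ` specG = {0, R0}" using R0_nonneg by (simp add: specG_eq)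
  then show ?thesis using R0_nonneg by (simp only:) (rule cSup_eq_maximum, auto)
qed

end


lemma lp_norm_single:
  assumes "1 \<le> p"
  shows "lp_norm p (\<lambda>i. if i = 0 then s else 0 :: real) = \<bar>s\<bar>"
proof (cases "p = \<infinity>")
  case True
  have "(SUP i. norm (if i = 0 then s else 0 :: real)) = \<bar>s\<bar>"
    by (rule cSup_eq_maximum) (auto simp: image_iff intro: exI[of _ 0])
  then show ?thesis using True by (simp add: lp_norm_def)
next
  case False
  define P where "P = enn2real p"
  have P: "P \<ge> 1" using False assms by (cases p) (auto simp: P_def simp flip: ennreal_1)
  have e: "(\<lambda>i. norm (if i = 0 then s else 0 :: real) powr P) = (\<lambda>i. if i = 0 then \<bar>s\<bar> powr P else 0)"
    by auto
  have "(\<Sum>i. norm (if i = 0 then s else 0 :: real) powr P) = \<bar>s\<bar> powr P"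
    unfolding e by (rule sums_unique[OF sums_single, symmetric])
  then show ?thesis using False P by (simp add: lp_norm_def P_def[symmetric] powr_powr)
qed

context LS begin

lemma fsum_real: "(x :: nat \<Rightarrow> real) \<in> lp_space p \<Longrightarrow> summable (\<lambda>k. f k * x k)"
  using fsum[of x] by simp

lemma Fm_lp: "Fm x \<in> lp_space p"
  unfolding Fm_def[abs_def] by (rule lp_single)

lemma Fm_bounded: "bounded_lp_op p Fm"
  unfolding bounded_lp_op_def
proof (intro conjI ballI allI)
  fix x :: "nat \<Rightarrow> real" assume "x \<in> lp_space p" show "Fm x \<in> lp_space p" by (rule Fm_lp)
next
  fix x y :: "nat \<Rightarrow> real" assume x: "x \<in> lp_space p" and y: "y \<in> lp_space p"
  show "Fm (\<lambda>i. x i + y i) = (\<lambda>i. Fm x i + Fm y i)"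
    using suminf_add[OF fsum_real[OF x] fsum_real[OF y]] by (auto simp: Fm_def algebra_simps)
next
  fix x :: "nat \<Rightarrow> real" and r :: real assume x: "x \<in> lp_space p"
  show "Fm (\<lambda>i. r * x i) = (\<lambda>i. r * Fm x i)"
    using suminf_mult[OF fsum_real[OF x], of r] by (auto simp: Fm_def algebra_simps)
next
  show "\<exists>C. \<forall>x\<in>lp_space p. lp_norm p (Fm x) \<le> C * lp_norm p x"
  proof (intro exI ballI)
    fix x :: "nat \<Rightarrow> real" assume x: "x \<in> lp_space p"
    have h: "summable (\<lambda>k. \<bar>f k\<bar> * norm (x k))"
      "(\<Sum>k. \<bar>f k\<bar> * norm (x k)) \<le> lp_norm q f * lp_norm p x"
      using holder_lp[OF hp hq hf x] by auto
    have "lp_norm p (Fm x) = \<bar>\<Sum>k. f k * x k\<bar>"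
      unfolding Fm_def[abs_def] by (rule lp_norm_single[OF hp])
    also have "\<dots> \<le> (\<Sum>k. \<bar>f k * x k\<bar>)"
      by (rule summable_rabs) (use h(1) in \<open>simp add: abs_mult\<close>)
    also have "\<dots> \<le> lp_norm q f * lp_norm p x" using h(2) by (simp add: abs_mult)
    finally show "lp_norm p (Fm x) \<le> lp_norm q f * lp_norm p x" .
  qed
qed

lemma Fm_cone: "preserves_cone p Fm"
  unfolding preserves_cone_def lp_plus_def
proof (intro ballI, clarify)
  fix x :: "nat \<Rightarrow> real" assume x: "x \<in> lp_space p" and pos: "\<forall>i. 0 \<le> x i"
  have "0 \<le> (\<Sum>k. f k * x k)"
    by (rule suminf_nonneg[OF fsum_real[OF x]]) (use hfpos pos in auto)
  then show "Fm x \<in> lp_space p \<and> (\<forall>i. 0 \<le> Fm x i)" using Fm_lp by (auto simp: Fm_def)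
qed

lemma complexify_A:
  assumes z: "z \<in> lp_space p"
  shows "complexify (\<lambda>x i. Tm x i + Fm x i) z = Ac z"
proof
  fix i
  show "complexify (\<lambda>x i. Tm x i + Fm x i) z i = Ac z i"
  proof (cases "i = 0")
    case True
    have s: "summable (\<lambda>k. of_real (f k) * z k)" by (rule fsum[OF z])
    have "(\<lambda>k. Re (of_real (f k) * z k)) sums Re (\<Sum>k. of_real (f k) * z k)"
      by (rule sums_Re[OF summable_sums[OF s]])
    then have r: "(\<Sum>k. f k * Re (z k)) = Re (\<Sum>k. of_real (f k) * z k)" by (simp add: sums_iff)
    have "(\<lambda>k. Im (of_real (f k) * z k)) sums Im (\<Sum>k. of_real (f k) * z k)"
      by (rule sums_Im[OF summable_sums[OF s]])
    then have m: "(\<Sum>k. f k * Im (z k)) = Im (\<Sum>k. of_real (f k) * z k)" by (simp add: sums_iff)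
    show ?thesis using True by (simp add: complexify_def Tm_def Fm_def Ac_def r m complex_eq_iff)
  next
    case False
    then show ?thesis by (simp add: complexify_def Tm_def Fm_def Ac_def complex_eq_iff)
  qed
qed

lemma RT_Re: "RT 1 (\<lambda>j. Re (z j)) k = Re (RT 1 z k)"
  by (simp add: RT_def)

lemma RT_Im: "RT 1 (\<lambda>j. Im (z j)) k = Im (RT 1 z k)"
  by (simp add: RT_def)

lemma complexify_G:
  assumes z: "z \<in> lp_space p"
  shows "complexify (Fm \<circ> the_inv_into (lp_space p) (\<lambda>x i. x i - Tm x i)) z = (\<lambda>i. if i = 0 then gam z else 0)"
proof
  fix i
  have iR: "the_inv_into (lp_space p) (\<lambda>x i. x i - Tm x i) (\<lambda>j. Re (z j)) = RT 1 (\<lambda>j. Re (z j))"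
    by (rule inv_eq[OF lp_Re[OF z]])
  have iI: "the_inv_into (lp_space p) (\<lambda>x i. x i - Tm x i) (\<lambda>j. Im (z j)) = RT 1 (\<lambda>j. Im (z j))"
    by (rule inv_eq[OF lp_Im[OF z]])
  have s: "summable (\<lambda>k. of_real (f k) * RT 1 z k)" by (rule gam_summable[OF z])
  have "(\<lambda>k. Re (of_real (f k) * RT 1 z k)) sums Re (gam z)"
    unfolding gam_def by (rule sums_Re[OF summable_sums[OF s]])
  then have r: "(\<Sum>k. f k * Re (RT 1 z k)) = Re (gam z)" by (simp add: sums_iff)
  have "(\<lambda>k. Im (of_real (f k) * RT 1 z k)) sums Im (gam z)"
    unfolding gam_def by (rule sums_Im[OF summable_sums[OF s]])
  then have m: "(\<Sum>k. f k * Im (RT 1 z k)) = Im (gam z)" by (simp add: sums_iff)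
  show "complexify (Fm \<circ> the_inv_into (lp_space p) (\<lambda>x i. x i - Tm x i)) z i = (if i = 0 then gam z else 0)"
    by (simp add: complexify_def iR iI Fm_def RT_Re RT_Im r m complex_eq_iff del: One_nat_def)
qed

lemma specA_eq: "lp_spectrum p (\<lambda>x i. Tm x i + Fm x i) = specA"
  unfolding lp_spectrum_def specA_def
  by (intro Collect_cong arg_cong[where f=Not] bij_betw_cong) (simp add: complexify_A)

lemma specG_eq': "lp_spectrum p (Fm \<circ> the_inv_into (lp_space p) (\<lambda>x i. x i - Tm x i)) = specG"
  unfolding lp_spectrum_def specG_def
  by (intro Collect_cong arg_cong[where f=Not] bij_betw_cong) (simp add: complexify_G)

end


theorem mainTheorem8:
  fixes p q :: ennreal and f t :: "nat \<Rightarrow> real"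
    and F T A :: "(nat \<Rightarrow> real) \<Rightarrow> (nat \<Rightarrow> real)"
  assumes hp: "1 \<le> p"
    and hq: "1 / p + 1 / q = 1"
    and hf: "f \<in> lp_space q"
    and hfpos: "\<forall>i. 0 \<le> f i"
    and ht: "\<forall>i. 0 \<le> t i \<and> t i \<le> 1"
    and hlimsup: "limsup (\<lambda>i. ereal (t i)) < 1"
    and hF: "F = (\<lambda>x i. if i = 0 then (\<Sum>k. f k * x k) else 0)"
    and hT: "T = (\<lambda>x i. if i = 0 then 0 else t (i - 1) * x (i - 1))"
    and hA: "A = (\<lambda>x i. T x i + F x i)"
  shows "bounded_lp_op p F \<and> preserves_cone p F \<and>
         (let R0 = spectral_radius p (F \<circ> the_inv_into (lp_space p) (\<lambda>x i. x i - T x i))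
          in summable (\<lambda>i. f i * (\<Prod>j<i. t j)) \<and>
             R0 = (\<Sum>i. f i * (\<Prod>j<i. t j)) \<and>
             ((R0 \<ge> spectral_radius p A \<and> spectral_radius p A > 1) \<or>
              (R0 = 1 \<and> spectral_radius p A = 1) \<or>
              (R0 \<le> spectral_radius p A \<and> spectral_radius p A < 1)))"
proof -
  obtain c0 where c0: "limsup (\<lambda>i. ereal (t i)) < ereal c0" "ereal c0 < 1"
    using ereal_dense2[OF hlimsup] by blast
  define c where "c = max c0 (1/2)"
  have c: "0 < c" "c < 1" using c0 by (auto simp: c_def)
  have "limsup (\<lambda>i. ereal (t i)) < ereal c"
    using c0(1) by (rule less_le_trans) (simp add: c_def)
  then have "eventually (\<lambda>i. ereal (t i) < ereal c) sequentially" by (rule Limsup_lessD)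
  then obtain N where N0: "\<forall>j\<ge>N. t j < c" by (auto simp: eventually_sequentially)
  then have N: "\<forall>j\<ge>N. t j \<le> c" by (simp add: less_imp_le)
  interpret L: LS p q f t c N
    by unfold_locales (use hp hq hf hfpos ht c N in auto)
  have FF: "F = L.Fm" using hF by (auto simp: L.Fm_def[abs_def])
  have TT: "T = L.Tm" using hT by (auto simp: L.Tm_def[abs_def])
  have AA: "A = (\<lambda>x i. L.Tm x i + L.Fm x i)" using hA FF TT by simp
  have radG: "spectral_radius p (F \<circ> the_inv_into (lp_space p) (\<lambda>x i. x i - T x i)) = L.R0"
    unfolding spectral_radius_def FF TT L.specG_eq' by (rule L.radG)
  have radA: "spectral_radius p A = Sup (cmod ` L.specA)"
    unfolding spectral_radius_def AA L.specA_eq ..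
  have aeq: "(\<lambda>i. f i * (\<Prod>j<i. t j)) = L.a"
    by (auto simp: L.a_def L.pi_def atLeast0LessThan)
  have tri: "(L.R0 \<ge> Sup (cmod ` L.specA) \<and> Sup (cmod ` L.specA) > 1) \<or>
             (L.R0 = 1 \<and> Sup (cmod ` L.specA) = 1) \<or>
             (L.R0 \<le> Sup (cmod ` L.specA) \<and> Sup (cmod ` L.specA) < 1)"
  proof (cases "L.R0 \<ge> 1")
    case True
    then show ?thesis using L.case_ge1 by (auto simp: L.R0_def)
  next
    case False
    then show ?thesis using L.case_lt1 by (auto simp: L.R0_def)
  qed
  show ?thesis
    unfolding Let_def radG radA aeq
    using L.Fm_bounded L.Fm_cone L.R0_summable tri FF by (simp add: L.R0_def)
qed


end
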